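(* Let $(X,\preceq)$ be a partially ordered set and suppose there is a metric $d$ on $X$ such that $(X,d)$ is complete. Let $f,g,H:X\to X$ be mappings such that: (a) $f(X)\subseteq H(X)$ and $g(X)\subseteq H(X)$; (b) $f$, $g$ and $H$ are continuous; (c) the pairs $\{f,H\}$ and $\{g,H\}$ are compatible; (d) $f$ and $g$ are weakly increasing with respect to $H$. Suppose there is $\beta\in\mathcal S$ such that for every $(x,y)\in X\times X$ with $Hx$ and $Hy$ comparable, $$d(fx,gy)\le \beta\big(d(Hx,Hy)\big)\,d(Hx,Hy).$$ Then $f$, $g$ and $H$ have a coincidence point, i.e. there exists $u\in X$ with $fu=gu=Hu$.
   Context: $\mathcal S$ denotes the class of functions $\beta:[0,\infty)\to[0,1)$ such that for every sequence $(t_n)$ in $[0,\infty)$, $\beta(t_n)\to 1$ implies $t_n\to 0$. A pair $\{f,g\}$ of self-maps of a metric space $(X,d)$ is compatible if $\lim_{n\to\infty} d(fgx_n,gfx_n)=0$ whenever $(x_n)$ is a sequence in $X$ with $\lim fx_n=\lim gx_n=t$ for some $t\in X$. For $R:X\to X$ and $x\in X$, $R^{-1}(x)=\{u\in X: Ru=x\}$. Given mappings $T,S,R:X\to X$ on a partially ordered set with $T(X)\subseteq R(X)$ and $S(X)\subseteq R(X)$, $S$ and $T$ are weakly increasing with respect to $R$ if for all $x\in X$: $Tx\preceq Sy$ for all $y\in R^{-1}(Tx)$, and $Sx\preceq Ty$ for all $y\in R^{-1}(Sx)$. A coincidence point of maps $T_1,\dots,T_N$ is a point $x$ with $T_1x=\dots=T_Nx$.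 *)

theory Defs
  imports "HOL-Analysis.Analysis"
begin

definition class_S :: "(real \<Rightarrow> real) \<Rightarrow> bool" where
  "class_S \<beta> \<longleftrightarrow>
     (\<forall>t\<ge>0. 0 \<le> \<beta> t \<and> \<beta> t < 1) \<and>
     (\<forall>t :: nat \<Rightarrow> real. (\<forall>n. t n \<ge> 0) \<longrightarrow> (\<lambda>n. \<beta> (t n)) \<longlonglongrightarrow> 1 \<longrightarrow> t \<longlonglongrightarrow> 0)"

definition compatible :: "('a::metric_space \<Rightarrow> 'a) \<Rightarrow> ('a \<Rightarrow> 'a) \<Rightarrow> bool" where
  "compatible f g \<longleftrightarrow>
     (\<forall>x :: nat \<Rightarrow> 'a. \<forall>t. (\<lambda>n. f (x n)) \<longlonglongrightarrow> t \<longrightarrow> (\<lambda>n. g (x n)) \<longlonglongrightarrow> t \<longrightarrow>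
        (\<lambda>n. dist (f (g (x n))) (g (f (x n)))) \<longlonglongrightarrow> 0)"

definition weakly_increasing_wrt ::
  "('a \<Rightarrow> 'a \<Rightarrow> bool) \<Rightarrow> ('a \<Rightarrow> 'a) \<Rightarrow> ('a \<Rightarrow> 'a) \<Rightarrow> ('a \<Rightarrow> 'a) \<Rightarrow> bool" where
  "weakly_increasing_wrt le T S R \<longleftrightarrow>
     (\<forall>x. (\<forall>y. R y = T x \<longrightarrow> le (T x) (S y)) \<and> (\<forall>y. R y = S x \<longrightarrow> le (S x) (T y)))"

end

theory Submission
  imports Defs
begin

theorem theorem2p5:
  fixes le :: "'a::metric_space \<Rightarrow> 'a \<Rightarrow> bool"
    and f g H :: "'a \<Rightarrow> 'a"
    and \<beta> :: "real \<Rightarrow> real"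
  assumes refl: "\<And>x. le x x"
    and antisym: "\<And>x y. le x y \<Longrightarrow> le y x \<Longrightarrow> x = y"
    and trans: "\<And>x y z. le x y \<Longrightarrow> le y z \<Longrightarrow> le x z"
    and complete: "complete (UNIV :: 'a set)"
    and range_f: "range f \<subseteq> range H"
    and range_g: "range g \<subseteq> range H"
    and cont_f: "continuous_on UNIV f"
    and cont_g: "continuous_on UNIV g"
    and cont_H: "continuous_on UNIV H"
    and compat_fH: "compatible f H"
    and compat_gH: "compatible g H"
    and weak_inc: "weakly_increasing_wrt le f g H"
    and beta_S: "class_S \<beta>"
    and contr: "\<And>x y. le (H x) (H y) \<or> le (H y) (H x) \<Longrightarrow>
                 dist (f x) (g y) \<le> \<beta> (dist (H x) (H y)) * dist (H x) (H y)"
  shows "\<exists>u. f u = g u \<and> g u = H u"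
proof -
  have b01: "\<And>t. t \<ge> 0 \<Longrightarrow> 0 \<le> \<beta> t \<and> \<beta> t < 1" using beta_S unfolding class_S_def by blast
  have bS: "\<And>t. (\<forall>n. t n \<ge> 0) \<Longrightarrow> (\<lambda>n. \<beta> (t n)) \<longlonglongrightarrow> 1 \<Longrightarrow> t \<longlonglongrightarrow> 0"
    using beta_S unfolding class_S_def by blast
  have lemA: "\<exists>\<delta>>0. \<forall>t\<ge>e. \<beta> t \<le> 1 - \<delta>" if e: "e > 0" for e
  proof (rule ccontr)
    assume "\<not> ?thesis"
    hence "\<forall>\<delta>>0. \<exists>t\<ge>e. \<beta> t > 1 - \<delta>" by (auto simp: not_le)
    hence "\<forall>n::nat. \<exists>t\<ge>e. \<beta> t > 1 - inverse (real (Suc n))" by simp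
    then obtain t where t: "\<And>n. t n \<ge> e \<and> \<beta> (t n) > 1 - inverse (real (Suc n))" by metis
    have "(\<lambda>n. \<beta> (t n)) \<longlonglongrightarrow> 1"
    proof (rule real_tendsto_sandwich)
      show "\<forall>\<^sub>F n in sequentially. 1 - inverse (real (Suc n)) \<le> \<beta> (t n)"
        using t by (simp add: less_imp_le)
      show "\<forall>\<^sub>F n in sequentially. \<beta> (t n) \<le> 1"
      proof (intro always_eventually allI)
        fix n show "\<beta> (t n) \<le> 1" using b01[of "t n"] t[of n] e by auto
      qed
      show "(\<lambda>n. 1 - inverse (real (Suc n))) \<longlonglongrightarrow> 1"
        using tendsto_diff[OF tendsto_const LIMSEQ_inverse_real_of_nat, of 1] by simp
    qed simp
    hence "t \<longlonglongrightarrow> 0" using bS t e by (meson less_le_trans less_imp_le)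
    hence "e \<le> 0" using t by (intro LIMSEQ_le_const[of t 0 e]) auto
    thus False using e by simp
  qed
  obtain p :: 'a where True by simp
  have exH: "\<exists>y. H y = f v" "\<exists>y. H y = g v" for v
  proof -
    have "f v \<in> range H" "g v \<in> range H" using range_f range_g by auto
    then obtain y1 y2 where "f v = H y1" "g v = H y2" by (auto simp: image_iff)
    thus "\<exists>y. H y = f v" "\<exists>y. H y = g v" by auto
  qed
  define x where "x = rec_nat (SOME y. H y = f p) (\<lambda>n xn. SOME y. H y = (if even n then g else f) xn)"
  have x0: "H (x 0) = f p" unfolding x_def using someI_ex[OF exH(1)] by simp
  have xS: "H (x (Suc n)) = (if even n then g else f) (x n)" for n
    unfolding x_def using someI_ex[OF exH(1)] someI_ex[OF exH(2)] by simp
  have form: "(even n \<longrightarrow> (\<exists>q. H (x n) = f q)) \<and> (odd n \<longrightarrow> (\<exists>q. H (x n) = g q))" for n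
    using x0 xS by (cases n) auto
  have wi1: "\<And>q y. H y = f q \<Longrightarrow> le (f q) (g y)" and wi2: "\<And>q y. H y = g q \<Longrightarrow> le (g q) (f y)"
    using weak_inc unfolding weakly_increasing_wrt_def by blast+
  have stepH: "le (H (x n)) (H (x (Suc n)))" for n
  proof (cases "even n")
    case True
    then obtain q where q: "H (x n) = f q" using form by blast
    show ?thesis using wi1[OF q] q xS[of n] True by simp
  next
    case False
    then obtain q where q: "H (x n) = g q" using form by blast
    show ?thesis using wi2[OF q] q xS[of n] False by simp
  qed
  have mono: "le (H (x m)) (H (x n))" if "m \<le> n" for m n
    using that
  proof (induction n rule: dec_induct)
    case base then show ?case by (rule refl)
  next
    case (step k) then show ?case using trans stepH by blast
  qed
  define z where "z n = H (x n)" for n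
  have comp: "le (z m) (z n) \<or> le (z n) (z m)" for m n
    unfolding z_def using mono nat_le_linear by blast
  have keyA: "dist (z (Suc n)) (z (Suc m)) \<le> \<beta> (dist (z n) (z m)) * dist (z n) (z m)"
    if "even n" "odd m" for n m
  proof -
    have "dist (f (x m)) (g (x n)) \<le> \<beta> (dist (H (x m)) (H (x n))) * dist (H (x m)) (H (x n))"
      using contr comp unfolding z_def by blast
    thus ?thesis using that xS[of n] xS[of m] unfolding z_def by (simp add: dist_commute)
  qed
  have key: "dist (z (Suc n)) (z (Suc m)) \<le> \<beta> (dist (z n) (z m)) * dist (z n) (z m)"
    if "odd (n + m)" for n m
  proof (cases "even n")
    case True
    then show ?thesis using keyA that by simp
  next
    case False
    then have "even m" using that by simp
    then show ?thesis using keyA[of m n] False by (simp add: dist_commute)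
  qed
  define a where "a n = dist (z n) (z (Suc n))" for n
  have a0: "a n \<ge> 0" for n unfolding a_def by simp
  have adec: "a (Suc n) \<le> \<beta> (a n) * a n" for n
    using key[of n "Suc n"] unfolding a_def by simp
  have ale: "a (Suc n) \<le> a n" for n
  proof -
    have "\<beta> (a n) * a n \<le> 1 * a n" using b01[OF a0[of n]] a0[of n] by (intro mult_right_mono) auto
    thus ?thesis using adec[of n] by simp
  qed
  have amono: "a n \<le> a m" if "m \<le> n" for m n
    using that by (induction n rule: dec_induct) (auto intro: order.trans[OF ale])
  have asmall: "\<exists>N. a N < r" if r: "r > 0" for r
  proof (rule ccontr)
    assume "\<not> ?thesis"
    hence ge: "\<And>n. a n \<ge> r" by (simp add: not_less)
    obtain \<delta> where d: "\<delta> > 0" "\<And>t. t \<ge> r \<Longrightarrow> \<beta> t \<le> 1 - \<delta>" using lemA[OF r] by blast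
    have st: "a (Suc n) \<le> a n - \<delta> * r" for n
    proof -
      have "\<beta> (a n) * a n \<le> (1 - \<delta>) * a n" using d(2)[OF ge[of n]] a0[of n] by (intro mult_right_mono) auto
      moreover have "\<delta> * r \<le> \<delta> * a n" using d(1) ge[of n] by simp
      ultimately show ?thesis using adec[of n] by (simp add: algebra_simps)
    qed
    have lin: "a n \<le> a 0 - real n * (\<delta> * r)" for n
    proof (induction n)
      case 0 then show ?case by simp
    next
      case (Suc n) then show ?case using st[of n] by (simp add: algebra_simps)
    qed
    obtain n :: nat where n: "real n > a 0 / (\<delta> * r)" using reals_Archimedean2 by blast
    have "real n * (\<delta> * r) > a 0" using n d(1) r by (simp add: field_simps)
    hence "a n < 0" using lin[of n] by simp
    thus False using a0[of n] by simp
  qed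
  have atend: "\<exists>N. \<forall>n\<ge>N. a n < r" if "r > 0" for r
    using asmall[OF that] amono by (meson le_less_trans)
  have cauchy: "Cauchy z"
  proof (rule metric_CauchyI)
    fix e :: real assume e: "e > 0"
    obtain \<delta> where d: "\<delta> > 0" "\<And>t. t \<ge> e/2 \<Longrightarrow> \<beta> t \<le> 1 - \<delta>" using lemA[of "e/2"] e by auto
    obtain N where N: "\<And>n. n \<ge> N \<Longrightarrow> a n < min (\<delta> * (e/2) / 2) (e/2)"
      using atend[of "min (\<delta> * (e/2) / 2) (e/2)"] d(1) e by auto
    have opp: "dist (z n) (z m) < e/2" if nm: "n \<ge> N" "m \<ge> N" "odd (n+m)" for n m
    proof (rule ccontr)
      define dd where "dd = dist (z n) (z m)"
      assume "\<not> ?thesis"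
      hence dge: "dd \<ge> e/2" unfolding dd_def by simp
      have bd: "\<beta> dd * dd \<le> (1 - \<delta>) * dd" using d(2)[OF dge] dge e by (intro mult_right_mono) auto
      have "dd \<le> dist (z n) (z (Suc n)) + dist (z (Suc n)) (z (Suc m)) + dist (z (Suc m)) (z m)"
        unfolding dd_def using dist_triangle[of "z n" "z m" "z (Suc n)"] dist_triangle[of "z (Suc n)" "z m" "z (Suc m)"] by linarith
      also have "\<dots> \<le> a n + \<beta> dd * dd + a m"
        using key[OF nm(3)] unfolding a_def dd_def by (simp add: dist_commute)
      finally have "\<delta> * dd \<le> a n + a m" using bd by (simp add: algebra_simps)
      moreover have "\<delta> * (e/2) \<le> \<delta> * dd" using d(1) dge by simp
      moreover have "a n + a m < \<delta> * (e/2)" using N[OF nm(1)] N[OF nm(2)] by simp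
      ultimately show False by simp
    qed
    show "\<exists>M. \<forall>m\<ge>M. \<forall>n\<ge>M. dist (z m) (z n) < e"
    proof (intro exI allI impI)
      fix m n assume mn: "m \<ge> N" "n \<ge> N"
      show "dist (z m) (z n) < e"
      proof (cases "odd (m + n)")
        case True
        then show ?thesis using opp[OF mn True] zero_le_dist[of "z m" "z n"] by linarith
      next
        case False
        hence "odd (m + Suc n)" by simp
        hence "dist (z m) (z (Suc n)) < e/2" using opp[of m "Suc n"] mn by simp
        moreover have "dist (z (Suc n)) (z n) < e/2" using N[OF mn(2)] unfolding a_def by (simp add: dist_commute)
        moreover have "dist (z m) (z n) \<le> dist (z m) (z (Suc n)) + dist (z (Suc n)) (z n)"
          by (rule dist_triangle)
        ultimately show ?thesis by simp
      qed
    qed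
  qed
  then obtain u where u: "z \<longlonglongrightarrow> u" using complete unfolding complete_def by blast
  have sub: "(\<lambda>k. z (2*k + c)) \<longlonglongrightarrow> u" for c
  proof -
    have "strict_mono (\<lambda>k::nat. 2*k + c)" by (simp add: strict_mono_Suc_iff)
    from LIMSEQ_subseq_LIMSEQ[OF u this] show ?thesis by (simp add: comp_def)
  qed
  have limeq: "T u = H u"
    if compat: "compatible T H" and cT: "continuous_on UNIV T"
      and y: "(\<lambda>k. T (y k)) \<longlonglongrightarrow> u" "(\<lambda>k. H (y k)) \<longlonglongrightarrow> u" for T y
  proof -
    have d0: "(\<lambda>k. dist (T (H (y k))) (H (T (y k)))) \<longlonglongrightarrow> 0"
      using compat y unfolding compatible_def by blast
    have "(\<lambda>k. T (H (y k))) \<longlonglongrightarrow> T u"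
      by (rule continuous_on_tendsto_compose[OF cT y(2)]) auto
    moreover have "(\<lambda>k. H (T (y k))) \<longlonglongrightarrow> H u"
      by (rule continuous_on_tendsto_compose[OF cont_H y(1)]) auto
    ultimately have "(\<lambda>k. dist (T (H (y k))) (H (T (y k)))) \<longlonglongrightarrow> dist (T u) (H u)"
      by (rule tendsto_dist)
    with d0 have "dist (T u) (H u) = 0" using LIMSEQ_unique by blast
    thus ?thesis by simp
  qed
  have fu: "f u = H u"
  proof (rule limeq[OF compat_fH cont_f])
    show "(\<lambda>k. f (x (2*k+1))) \<longlonglongrightarrow> u" using sub[of 2] xS[of "2*k+1" for k]
      unfolding z_def by (simp add: algebra_simps)
    show "(\<lambda>k. H (x (2*k+1))) \<longlonglongrightarrow> u" using sub[of 1] unfolding z_def by simp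
  qed
  have gu: "g u = H u"
  proof (rule limeq[OF compat_gH cont_g])
    show "(\<lambda>k. g (x (2*k))) \<longlonglongrightarrow> u" using sub[of 1] xS[of "2*k" for k]
      unfolding z_def by simp
    show "(\<lambda>k. H (x (2*k))) \<longlonglongrightarrow> u" using sub[of 0] unfolding z_def by simp
  qed
  show ?thesis using fu gu by metis
qed

end
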